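(* Let $\Lambda$ be an admissible temporal logic over a temporal language $\mathcal L$. Then the canonical model $\mathfrak M_c=(W_c,\preccurlyeq_c,S_c,\ell_c)$ of $\Lambda$ is a deterministic weak quasimodel; that is: $\preccurlyeq_c$ is a partial order on $W_c$; each $\ell_c(\Phi)$ satisfies the type conditions (1)–(9); $\Phi\preccurlyeq_c\Psi$ implies $\ell_c(\Phi)\preccurlyeq_T\ell_c(\Psi)$; for every $\Phi\in W_c$ and every $\varphi\to\psi\in\Phi^-$ there is $\Psi\in W_c$ with $\Phi\preccurlyeq_c\Psi$, $\varphi\in\Psi^+$ and $\psi\in\Psi^-$; and $S_c$ is a monotone function $W_c\to W_c$ such that every pair $(\Phi,S_c(\Phi))$ is sensible.
   Context: Formulas are built from $\bot$ and propositional variables using $\wedge,\vee,\to$ and modalities $\circ,\Diamond,\Box,\forall$. A temporal language $\mathcal L_M$ ($M\subseteq\{\Diamond,\Box,\forall\}$) uses $\bot$, variables, $\wedge,\vee,\to,\circ$ and only modalities in $M$. ${\sf ITL}^0_M$ is the logic over $\mathcal L_M$ axiomatized by intuitionistic propositional logic, (N1) $\neg\circ\bot$, (N2) $\circ\varphi\wedge\circ\psi\to\circ(\varphi\wedge\psi)$, (N3) $\circ(\varphi\vee\psi)\to\circ\varphi\vee\circ\psi$, (N4) $\circ(\varphi\to\psi)\to(\circ\varphi\to\circ\psi)$, rules modus ponens and from $\varphi$ infer $\circ\varphi$; plus, if $\Diamond\in M$, axiom $\varphi\vee\circ\Diamond\varphi\to\Diamond\varphi$ and rules from $\varphi\to\psi$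 infer $\Diamond\varphi\to\Diamond\psi$, from $\circ\varphi\to\varphi$ infer $\Diamond\varphi\to\varphi$; plus, if $\forall\in M$, axioms $\forall\varphi\vee\neg\forall\varphi$, $\forall(\varphi\to\psi)\to(\forall\varphi\to\forall\psi)$, $\forall(\varphi\vee\forall\psi)\to\forall\varphi\vee\forall\psi$, $\forall\varphi\to\varphi$, $\forall\varphi\to\forall\forall\varphi$, $\forall\varphi\leftrightarrow\circ\forall\varphi$ and rule from $\varphi$ infer $\forall\varphi$. An admissible temporal logic over $\mathcal L_M$ is a set of $\mathcal L_M$-formulas containing all substitution instances of the axioms of ${\sf ITL}^0_M$ and closed under its rules. $\Gamma\vdash\Delta$ means there are finite $\Gamma'\subseteq\Gamma$, $\Delta'\subseteq\Delta$ with $\bigwedge\Gamma'\to\bigvee\Delta'\in\Lambda$. A prime $\mathcal L$-type is a pair $\Phi=(\Phi^+,\Phi^-)$ of sets of $\mathcal L$-formulas with $\Phi^+\cup\Phi^-=\mathcal L$ and $\Phi^+\not\vdash\Phi^-$. For pairs, $\Phi\preccurlyeq_T\Psi$ means $\Phi^+\subseteq\Psi^+$ and $\Psi^-\subseteq\Phi^-$. Type conditions: (1) $\Phi^-\cap\Phi^+=\varnothing$; (2) $\bot\notin\Phi^+$; (3) $\varphi\wedge\psi\in\Phi^+\Rightarrow\varphi,\psi\in\Phi^+$; (4) $\varphi\wedge\psi\in\Phi^-\Rightarrow\varphi\in\Phi^-$ or $\psi\in\Phi^-$; (5) $\varphi\vee\psi\in\Phi^+\Rightarrow\varphi\in\Phi^+$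 or $\psi\in\Phi^+$; (6) $\varphi\vee\psi\in\Phi^-\Rightarrow\varphi,\psi\in\Phi^-$; (7) $\varphi\to\psi\in\Phi^+\Rightarrow\varphi\in\Phi^-$ or $\psi\in\Phi^+$; (8) $\varphi\to\psi\in\Phi^-\Rightarrow\psi\in\Phi^-$; (9) $\Diamond\varphi\in\Phi^-\Rightarrow\varphi\in\Phi^-$. A pair $(\Phi,\Psi)$ is sensible if: $\circ\varphi\in\Phi^+\Rightarrow\varphi\in\Psi^+$; $\circ\varphi\in\Phi^-\Rightarrow\varphi\in\Psi^-$; $\Diamond\varphi\in\Phi^+\Rightarrow\varphi\in\Phi^+$ or $\Diamond\varphi\in\Psi^+$; $\Diamond\varphi\in\Phi^-\Rightarrow\Diamond\varphi\in\Psi^-$; $\forall\varphi\in\Phi^+\Leftrightarrow\forall\varphi\in\Psi^+$; $\forall\varphi\in\Phi^-\Leftrightarrow\forall\varphi\in\Psi^-$. The canonical model: $W_c$ is the set of prime $\mathcal L$-types, $\preccurlyeq_c$ is $\preccurlyeq_T$ restricted to $W_c$, $\Phi\mathrel{S_c}\Psi$ iff $(\Phi,\Psi)$ is sensible, and $\ell_c$ is the identity. *)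

theory Defs
  imports Main
begin

datatype fml =
    Bot
  | Var nat
  | And fml fml
  | Or fml fml
  | Imp fml fml
  | Nxt fml
  | Dia fml
  | Bx fml
  | All fml

datatype modality = MDia | MBox | MAll

definition Neg :: "fml \<Rightarrow> fml" where "Neg \<phi> = Imp \<phi> Bot"
definition Top :: fml where "Top = Imp Bot Bot"
definition Iff :: "fml \<Rightarrow> fml \<Rightarrow> fml" where "Iff \<phi> \<psi> = And (Imp \<phi> \<psi>) (Imp \<psi> \<phi>)"

fun inL :: "modality set \<Rightarrow> fml \<Rightarrow> bool" where
  "inL M Bot = True"
| "inL M (Var p) = True"
| "inL M (And a b) = (inL M a \<and> inL M b)"
| "inL M (Or a b) = (inL M a \<and> inL M b)"
| "inL M (Imp a b) = (inL M a \<and> inL M b)"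
| "inL M (Nxt a) = inL M a"
| "inL M (Dia a) = (MDia \<in> M \<and> inL M a)"
| "inL M (Bx a) = (MBox \<in> M \<and> inL M a)"
| "inL M (All a) = (MAll \<in> M \<and> inL M a)"

definition Lang :: "modality set \<Rightarrow> fml set" where
  "Lang M = {\<phi>. inL M \<phi>}"

text \<open>Intuitionistic propositional logic is represented by a standard Hilbert
axiomatization (schemas instantiated with arbitrary L_M-formulas) together with
modus ponens; schema instances are exactly substitution instances.\<close>

definition admissible :: "modality set \<Rightarrow> fml set \<Rightarrow> bool" where
  "admissible M \<Lambda> \<longleftrightarrow>
     \<Lambda> \<subseteq> Lang M \<and>
     \<comment> \<open>IPL axioms\<close>
     (\<forall>\<phi>\<in>Lang M. \<forall>\<psi>\<in>Lang M. \<forall>\<chi>\<in>Lang M.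
        Imp \<phi> (Imp \<psi> \<phi>) \<in> \<Lambda> \<and>
        Imp (Imp \<phi> (Imp \<psi> \<chi>)) (Imp (Imp \<phi> \<psi>) (Imp \<phi> \<chi>)) \<in> \<Lambda> \<and>
        Imp (And \<phi> \<psi>) \<phi> \<in> \<Lambda> \<and>
        Imp (And \<phi> \<psi>) \<psi> \<in> \<Lambda> \<and>
        Imp \<phi> (Imp \<psi> (And \<phi> \<psi>)) \<in> \<Lambda> \<and>
        Imp \<phi> (Or \<phi> \<psi>) \<in> \<Lambda> \<and>
        Imp \<psi> (Or \<phi> \<psi>) \<in> \<Lambda> \<and>
        Imp (Imp \<phi> \<chi>) (Imp (Imp \<psi> \<chi>) (Imp (Or \<phi> \<psi>) \<chi>)) \<in> \<Lambda> \<and>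
        Imp Bot \<phi> \<in> \<Lambda>) \<and>
     \<comment> \<open>(N1)--(N4)\<close>
     Neg (Nxt Bot) \<in> \<Lambda> \<and>
     (\<forall>\<phi>\<in>Lang M. \<forall>\<psi>\<in>Lang M.
        Imp (And (Nxt \<phi>) (Nxt \<psi>)) (Nxt (And \<phi> \<psi>)) \<in> \<Lambda> \<and>
        Imp (Nxt (Or \<phi> \<psi>)) (Or (Nxt \<phi>) (Nxt \<psi>)) \<in> \<Lambda> \<and>
        Imp (Nxt (Imp \<phi> \<psi>)) (Imp (Nxt \<phi>) (Nxt \<psi>)) \<in> \<Lambda>) \<and>
     \<comment> \<open>modus ponens and \<circ>-necessitation\<close>
     (\<forall>\<phi> \<psi>. \<phi> \<in> \<Lambda> \<longrightarrow> Imp \<phi> \<psi> \<in> \<Lambda> \<longrightarrow> \<psi> \<in> \<Lambda>) \<and>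
     (\<forall>\<phi>. \<phi> \<in> \<Lambda> \<longrightarrow> Nxt \<phi> \<in> \<Lambda>) \<and>
     \<comment> \<open>\<Diamond>\<close>
     (MDia \<in> M \<longrightarrow>
        (\<forall>\<phi>\<in>Lang M. Imp (Or \<phi> (Nxt (Dia \<phi>))) (Dia \<phi>) \<in> \<Lambda>) \<and>
        (\<forall>\<phi> \<psi>. Imp \<phi> \<psi> \<in> \<Lambda> \<longrightarrow> Imp (Dia \<phi>) (Dia \<psi>) \<in> \<Lambda>) \<and>
        (\<forall>\<phi>. Imp (Nxt \<phi>) \<phi> \<in> \<Lambda> \<longrightarrow> Imp (Dia \<phi>) \<phi> \<in> \<Lambda>)) \<and>
     \<comment> \<open>\<forall>\<close>
     (MAll \<in> M \<longrightarrow>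
        (\<forall>\<phi>\<in>Lang M. \<forall>\<psi>\<in>Lang M.
           Or (All \<phi>) (Neg (All \<phi>)) \<in> \<Lambda> \<and>
           Imp (All (Imp \<phi> \<psi>)) (Imp (All \<phi>) (All \<psi>)) \<in> \<Lambda> \<and>
           Imp (All (Or \<phi> (All \<psi>))) (Or (All \<phi>) (All \<psi>)) \<in> \<Lambda> \<and>
           Imp (All \<phi>) \<phi> \<in> \<Lambda> \<and>
           Imp (All \<phi>) (All (All \<phi>)) \<in> \<Lambda> \<and>
           Iff (All \<phi>) (Nxt (All \<phi>)) \<in> \<Lambda>) \<and>
        (\<forall>\<phi>. \<phi> \<in> \<Lambda> \<longrightarrow> All \<phi> \<in> \<Lambda>))"

fun conjs :: "fml list \<Rightarrow> fml" where
  "conjs [] = Top"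
| "conjs [\<phi>] = \<phi>"
| "conjs (\<phi> # \<phi>s) = And \<phi> (conjs \<phi>s)"

fun disjs :: "fml list \<Rightarrow> fml" where
  "disjs [] = Bot"
| "disjs [\<phi>] = \<phi>"
| "disjs (\<phi> # \<phi>s) = Or \<phi> (disjs \<phi>s)"

definition derives :: "fml set \<Rightarrow> fml set \<Rightarrow> fml set \<Rightarrow> bool" where
  "derives \<Lambda> \<Gamma> \<Delta> \<longleftrightarrow>
     (\<exists>gs ds. set gs \<subseteq> \<Gamma> \<and> set ds \<subseteq> \<Delta> \<and> Imp (conjs gs) (disjs ds) \<in> \<Lambda>)"

type_synonym ftype = "fml set \<times> fml set"

definition prime_type :: "modality set \<Rightarrow> fml set \<Rightarrow> ftype \<Rightarrow> bool" where
  "prime_type M \<Lambda> \<Phi> \<longleftrightarrow>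
     fst \<Phi> \<subseteq> Lang M \<and> snd \<Phi> \<subseteq> Lang M \<and>
     fst \<Phi> \<union> snd \<Phi> = Lang M \<and> \<not> derives \<Lambda> (fst \<Phi>) (snd \<Phi>)"

definition leT :: "ftype \<Rightarrow> ftype \<Rightarrow> bool" where
  "leT \<Phi> \<Psi> \<longleftrightarrow> fst \<Phi> \<subseteq> fst \<Psi> \<and> snd \<Psi> \<subseteq> snd \<Phi>"

definition type_conds :: "ftype \<Rightarrow> bool" where
  "type_conds \<Phi> \<longleftrightarrow> (let P = fst \<Phi>; N = snd \<Phi> in
     P \<inter> N = {} \<and>
     Bot \<notin> P \<and>
     (\<forall>\<phi> \<psi>. And \<phi> \<psi> \<in> P \<longrightarrow> \<phi> \<in> P \<and> \<psi> \<in> P) \<and>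
     (\<forall>\<phi> \<psi>. And \<phi> \<psi> \<in> N \<longrightarrow> \<phi> \<in> N \<or> \<psi> \<in> N) \<and>
     (\<forall>\<phi> \<psi>. Or \<phi> \<psi> \<in> P \<longrightarrow> \<phi> \<in> P \<or> \<psi> \<in> P) \<and>
     (\<forall>\<phi> \<psi>. Or \<phi> \<psi> \<in> N \<longrightarrow> \<phi> \<in> N \<and> \<psi> \<in> N) \<and>
     (\<forall>\<phi> \<psi>. Imp \<phi> \<psi> \<in> P \<longrightarrow> \<phi> \<in> N \<or> \<psi> \<in> P) \<and>
     (\<forall>\<phi> \<psi>. Imp \<phi> \<psi> \<in> N \<longrightarrow> \<psi> \<in> N) \<and>
     (\<forall>\<phi>. Dia \<phi> \<in> N \<longrightarrow> \<phi> \<in> N))"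

definition sensible :: "ftype \<Rightarrow> ftype \<Rightarrow> bool" where
  "sensible \<Phi> \<Psi> \<longleftrightarrow>
     (\<forall>\<phi>. Nxt \<phi> \<in> fst \<Phi> \<longrightarrow> \<phi> \<in> fst \<Psi>) \<and>
     (\<forall>\<phi>. Nxt \<phi> \<in> snd \<Phi> \<longrightarrow> \<phi> \<in> snd \<Psi>) \<and>
     (\<forall>\<phi>. Dia \<phi> \<in> fst \<Phi> \<longrightarrow> \<phi> \<in> fst \<Phi> \<or> Dia \<phi> \<in> fst \<Psi>) \<and>
     (\<forall>\<phi>. Dia \<phi> \<in> snd \<Phi> \<longrightarrow> Dia \<phi> \<in> snd \<Psi>) \<and>
     (\<forall>\<phi>. All \<phi> \<in> fst \<Phi> \<longleftrightarrow> All \<phi> \<in> fst \<Psi>) \<and>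
     (\<forall>\<phi>. All \<phi> \<in> snd \<Phi> \<longleftrightarrow> All \<phi> \<in> snd \<Psi>)"

definition Wc :: "modality set \<Rightarrow> fml set \<Rightarrow> ftype set" where
  "Wc M \<Lambda> = {\<Phi>. prime_type M \<Lambda> \<Phi>}"

definition Sc :: "ftype \<Rightarrow> ftype \<Rightarrow> bool" where
  "Sc \<Phi> \<Psi> \<longleftrightarrow> sensible \<Phi> \<Psi>"

text \<open>A deterministic weak quasimodel (W, \<preccurlyeq>, S, \<ell>), with S given as a relation
that is required to be a (total, single-valued) monotone function on W.\<close>
definition det_weak_quasimodel ::
  "'w set \<Rightarrow> ('w \<Rightarrow> 'w \<Rightarrow> bool) \<Rightarrow> ('w \<Rightarrow> 'w \<Rightarrow> bool) \<Rightarrow> ('w \<Rightarrow> ftype) \<Rightarrow> bool" where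
  "det_weak_quasimodel W le S lab \<longleftrightarrow>
     \<comment> \<open>partial order\<close>
     (\<forall>w\<in>W. le w w) \<and>
     (\<forall>u\<in>W. \<forall>v\<in>W. \<forall>w\<in>W. le u v \<longrightarrow> le v w \<longrightarrow> le u w) \<and>
     (\<forall>u\<in>W. \<forall>v\<in>W. le u v \<longrightarrow> le v u \<longrightarrow> u = v) \<and>
     \<comment> \<open>labels are types\<close>
     (\<forall>w\<in>W. type_conds (lab w)) \<and>
     \<comment> \<open>monotone labelling\<close>
     (\<forall>u\<in>W. \<forall>v\<in>W. le u v \<longrightarrow> leT (lab u) (lab v)) \<and>
     \<comment> \<open>implications in the negative part are witnessed\<close>
     (\<forall>w\<in>W. \<forall>\<phi> \<psi>. Imp \<phi> \<psi> \<in> snd (lab w) \<longrightarrow>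
        (\<exists>v\<in>W. le w v \<and> \<phi> \<in> fst (lab v) \<and> \<psi> \<in> snd (lab v))) \<and>
     \<comment> \<open>S is a function W \<rightarrow> W\<close>
     (\<forall>w\<in>W. \<exists>!v. v \<in> W \<and> S w v) \<and>
     \<comment> \<open>S is monotone\<close>
     (\<forall>u\<in>W. \<forall>v\<in>W. \<forall>u'\<in>W. \<forall>v'\<in>W. le u v \<longrightarrow> S u u' \<longrightarrow> S v v' \<longrightarrow> le u' v') \<and>
     \<comment> \<open>every S-pair is sensible\<close>
     (\<forall>w\<in>W. \<forall>v\<in>W. S w v \<longrightarrow> sensible (lab w) (lab v))"

end

theory Submission
  imports Defs
begin

lemma Lang_iff[simp]: "x \<in> Lang M \<longleftrightarrow> inL M x" by (simp add: Lang_def)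

locale adm =
  fixes M :: "modality set" and \<Lambda> :: "fml set"
  assumes adm: "admissible M \<Lambda>"
begin

lemma A_all: "\<Lambda> \<subseteq> Lang M \<and>
     (\<forall>\<phi>\<in>Lang M. \<forall>\<psi>\<in>Lang M. \<forall>\<chi>\<in>Lang M.
        Imp \<phi> (Imp \<psi> \<phi>) \<in> \<Lambda> \<and>
        Imp (Imp \<phi> (Imp \<psi> \<chi>)) (Imp (Imp \<phi> \<psi>) (Imp \<phi> \<chi>)) \<in> \<Lambda> \<and>
        Imp (And \<phi> \<psi>) \<phi> \<in> \<Lambda> \<and>
        Imp (And \<phi> \<psi>) \<psi> \<in> \<Lambda> \<and>
        Imp \<phi> (Imp \<psi> (And \<phi> \<psi>)) \<in> \<Lambda> \<and>
        Imp \<phi> (Or \<phi> \<psi>) \<in> \<Lambda> \<and>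
        Imp \<psi> (Or \<phi> \<psi>) \<in> \<Lambda> \<and>
        Imp (Imp \<phi> \<chi>) (Imp (Imp \<psi> \<chi>) (Imp (Or \<phi> \<psi>) \<chi>)) \<in> \<Lambda> \<and>
        Imp Bot \<phi> \<in> \<Lambda>) \<and>
     Neg (Nxt Bot) \<in> \<Lambda> \<and>
     (\<forall>\<phi>\<in>Lang M. \<forall>\<psi>\<in>Lang M.
        Imp (And (Nxt \<phi>) (Nxt \<psi>)) (Nxt (And \<phi> \<psi>)) \<in> \<Lambda> \<and>
        Imp (Nxt (Or \<phi> \<psi>)) (Or (Nxt \<phi>) (Nxt \<psi>)) \<in> \<Lambda> \<and>
        Imp (Nxt (Imp \<phi> \<psi>)) (Imp (Nxt \<phi>) (Nxt \<psi>)) \<in> \<Lambda>) \<and>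
     (\<forall>\<phi> \<psi>. \<phi> \<in> \<Lambda> \<longrightarrow> Imp \<phi> \<psi> \<in> \<Lambda> \<longrightarrow> \<psi> \<in> \<Lambda>) \<and>
     (\<forall>\<phi>. \<phi> \<in> \<Lambda> \<longrightarrow> Nxt \<phi> \<in> \<Lambda>) \<and>
     (MDia \<in> M \<longrightarrow>
        (\<forall>\<phi>\<in>Lang M. Imp (Or \<phi> (Nxt (Dia \<phi>))) (Dia \<phi>) \<in> \<Lambda>) \<and>
        (\<forall>\<phi> \<psi>. Imp \<phi> \<psi> \<in> \<Lambda> \<longrightarrow> Imp (Dia \<phi>) (Dia \<psi>) \<in> \<Lambda>) \<and>
        (\<forall>\<phi>. Imp (Nxt \<phi>) \<phi> \<in> \<Lambda> \<longrightarrow> Imp (Dia \<phi>) \<phi> \<in> \<Lambda>)) \<and>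
     (MAll \<in> M \<longrightarrow>
        (\<forall>\<phi>\<in>Lang M. \<forall>\<psi>\<in>Lang M.
           Or (All \<phi>) (Neg (All \<phi>)) \<in> \<Lambda> \<and>
           Imp (All (Imp \<phi> \<psi>)) (Imp (All \<phi>) (All \<psi>)) \<in> \<Lambda> \<and>
           Imp (All (Or \<phi> (All \<psi>))) (Or (All \<phi>) (All \<psi>)) \<in> \<Lambda> \<and>
           Imp (All \<phi>) \<phi> \<in> \<Lambda> \<and>
           Imp (All \<phi>) (All (All \<phi>)) \<in> \<Lambda> \<and>
           Iff (All \<phi>) (Nxt (All \<phi>)) \<in> \<Lambda>) \<and>
        (\<forall>\<phi>. \<phi> \<in> \<Lambda> \<longrightarrow> All \<phi> \<in> \<Lambda>))"
  using adm unfolding admissible_def by assumption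

lemmas A1 = A_all[THEN conjunct1]
lemmas A2 = A_all[THEN conjunct2, THEN conjunct1]
lemmas A3 = A_all[THEN conjunct2, THEN conjunct2, THEN conjunct1]
lemmas A4 = A_all[THEN conjunct2, THEN conjunct2, THEN conjunct2, THEN conjunct1]
lemmas A5 = A_all[THEN conjunct2, THEN conjunct2, THEN conjunct2, THEN conjunct2, THEN conjunct1]
lemmas A6 = A_all[THEN conjunct2, THEN conjunct2, THEN conjunct2, THEN conjunct2, THEN conjunct2, THEN conjunct1]
lemmas A7 = A_all[THEN conjunct2, THEN conjunct2, THEN conjunct2, THEN conjunct2, THEN conjunct2, THEN conjunct2, THEN conjunct1]
lemmas A8 = A_all[THEN conjunct2, THEN conjunct2, THEN conjunct2, THEN conjunct2, THEN conjunct2, THEN conjunct2, THEN conjunct2]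

lemma thmL: "a \<in> \<Lambda> \<Longrightarrow> inL M a"
  using A1 by auto

lemma K: "inL M a \<Longrightarrow> inL M b \<Longrightarrow> Imp a (Imp b a) \<in> \<Lambda>"
  using A2 by simp
lemma S: "inL M a \<Longrightarrow> inL M b \<Longrightarrow> inL M c \<Longrightarrow>
   Imp (Imp a (Imp b c)) (Imp (Imp a b) (Imp a c)) \<in> \<Lambda>"
  using A2 by simp
lemma andE1: "inL M a \<Longrightarrow> inL M b \<Longrightarrow> Imp (And a b) a \<in> \<Lambda>"
  using A2 by simp
lemma andE2: "inL M a \<Longrightarrow> inL M b \<Longrightarrow> Imp (And a b) b \<in> \<Lambda>"
  using A2 by simp
lemma andI: "inL M a \<Longrightarrow> inL M b \<Longrightarrow> Imp a (Imp b (And a b)) \<in> \<Lambda>"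
  using A2 by simp
lemma orI1: "inL M a \<Longrightarrow> inL M b \<Longrightarrow> Imp a (Or a b) \<in> \<Lambda>"
  using A2 by simp
lemma orI2: "inL M a \<Longrightarrow> inL M b \<Longrightarrow> Imp b (Or a b) \<in> \<Lambda>"
  using A2 by simp
lemma orE: "inL M a \<Longrightarrow> inL M b \<Longrightarrow> inL M c \<Longrightarrow>
   Imp (Imp a c) (Imp (Imp b c) (Imp (Or a b) c)) \<in> \<Lambda>"
  using A2 by simp
lemma botE: "inL M a \<Longrightarrow> Imp Bot a \<in> \<Lambda>"
  using A2 by simp
lemma MP: "a \<in> \<Lambda> \<Longrightarrow> Imp a b \<in> \<Lambda> \<Longrightarrow> b \<in> \<Lambda>"
  using A5 by blast
lemma nec: "a \<in> \<Lambda> \<Longrightarrow> Nxt a \<in> \<Lambda>"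
  using A6 by blast
lemma N1: "Imp (Nxt Bot) Bot \<in> \<Lambda>"
  using A3 unfolding Neg_def .
lemma N2: "inL M a \<Longrightarrow> inL M b \<Longrightarrow> Imp (And (Nxt a) (Nxt b)) (Nxt (And a b)) \<in> \<Lambda>"
  using A4 by simp
lemma N3: "inL M a \<Longrightarrow> inL M b \<Longrightarrow> Imp (Nxt (Or a b)) (Or (Nxt a) (Nxt b)) \<in> \<Lambda>"
  using A4 by simp
lemma N4: "inL M a \<Longrightarrow> inL M b \<Longrightarrow> Imp (Nxt (Imp a b)) (Imp (Nxt a) (Nxt b)) \<in> \<Lambda>"
  using A4 by simp
lemma diaAx: "MDia \<in> M \<Longrightarrow> inL M a \<Longrightarrow> Imp (Or a (Nxt (Dia a))) (Dia a) \<in> \<Lambda>"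
  using A7 by simp
lemma diaMono: "MDia \<in> M \<Longrightarrow> Imp a b \<in> \<Lambda> \<Longrightarrow> Imp (Dia a) (Dia b) \<in> \<Lambda>"
  using A7 by blast
lemma diaInd: "MDia \<in> M \<Longrightarrow> Imp (Nxt a) a \<in> \<Lambda> \<Longrightarrow> Imp (Dia a) a \<in> \<Lambda>"
  using A7 by blast
lemma allIff: "MAll \<in> M \<Longrightarrow> inL M a \<Longrightarrow> Iff (All a) (Nxt (All a)) \<in> \<Lambda>"
  using A8 by simp

lemma thmL2: "Imp a b \<in> \<Lambda> \<Longrightarrow> inL M a \<and> inL M b"
  using thmL by fastforce

lemma I: "inL M a \<Longrightarrow> Imp a a \<in> \<Lambda>"
proof -
  assume a: "inL M a"
  have aa: "inL M (Imp a a)" using a by simp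
  have 1: "Imp (Imp a (Imp (Imp a a) a)) (Imp (Imp a (Imp a a)) (Imp a a)) \<in> \<Lambda>"
    using S[OF a aa a] .
  have 2: "Imp a (Imp (Imp a a) a) \<in> \<Lambda>" using K[OF a aa] .
  have 3: "Imp a (Imp a a) \<in> \<Lambda>" using K[OF a a] .
  show ?thesis using MP[OF 3 MP[OF 2 1]] .
qed

lemma weak: "b \<in> \<Lambda> \<Longrightarrow> inL M a \<Longrightarrow> Imp a b \<in> \<Lambda>"
  by (rule MP[OF _ K[OF thmL]])

lemma hmp: "Imp a b \<in> \<Lambda> \<Longrightarrow> Imp a (Imp b c) \<in> \<Lambda> \<Longrightarrow> Imp a c \<in> \<Lambda>"
proof -
  assume h1: "Imp a b \<in> \<Lambda>" and h2: "Imp a (Imp b c) \<in> \<Lambda>"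
  have L: "inL M a" "inL M b" "inL M c" using thmL2[OF h1] thmL2[OF h2] by auto
  show ?thesis using MP[OF h1 MP[OF h2 S[OF L]]] .
qed

lemma tr: "Imp a b \<in> \<Lambda> \<Longrightarrow> Imp b c \<in> \<Lambda> \<Longrightarrow> Imp a c \<in> \<Lambda>"
proof -
  assume h1: "Imp a b \<in> \<Lambda>" and h2: "Imp b c \<in> \<Lambda>"
  have "inL M a" using thmL2[OF h1] by auto
  show ?thesis by (rule hmp[OF h1 weak[OF h2 \<open>inL M a\<close>]])
qed

lemma cI: "Imp c a \<in> \<Lambda> \<Longrightarrow> Imp c b \<in> \<Lambda> \<Longrightarrow> Imp c (And a b) \<in> \<Lambda>"
proof -
  assume h1: "Imp c a \<in> \<Lambda>" and h2: "Imp c b \<in> \<Lambda>"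
  have L: "inL M a" "inL M b" using thmL2[OF h1] thmL2[OF h2] by auto
  have "Imp c (Imp b (And a b)) \<in> \<Lambda>" by (rule tr[OF h1 andI[OF L]])
  then show ?thesis by (rule hmp[OF h2])
qed

lemma dE: "Imp a c \<in> \<Lambda> \<Longrightarrow> Imp b c \<in> \<Lambda> \<Longrightarrow> Imp (Or a b) c \<in> \<Lambda>"
proof -
  assume h1: "Imp a c \<in> \<Lambda>" and h2: "Imp b c \<in> \<Lambda>"
  have L: "inL M a" "inL M b" "inL M c" using thmL2[OF h1] thmL2[OF h2] by auto
  show ?thesis by (rule MP[OF h2 MP[OF h1 orE[OF L]]])
qed

lemma lift: "Imp x y \<in> \<Lambda> \<Longrightarrow> inL M b \<Longrightarrow> Imp (Imp b x) (Imp b y) \<in> \<Lambda>"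
proof -
  assume h: "Imp x y \<in> \<Lambda>" and b: "inL M b"
  have L: "inL M x" "inL M y" using thmL2[OF h] by auto
  have "Imp b (Imp x y) \<in> \<Lambda>" by (rule weak[OF h b])
  then show ?thesis by (rule MP[OF _ S[OF b L]])
qed

lemma curry: "Imp (And a b) c \<in> \<Lambda> \<Longrightarrow> Imp a (Imp b c) \<in> \<Lambda>"
proof -
  assume h: "Imp (And a b) c \<in> \<Lambda>"
  have L: "inL M a" "inL M b" using thmL2[OF h] by auto
  show ?thesis by (rule tr[OF andI[OF L] lift[OF h L(2)]])
qed

lemma uncurry: "Imp a (Imp b c) \<in> \<Lambda> \<Longrightarrow> Imp (And a b) c \<in> \<Lambda>"
proof -
  assume h: "Imp a (Imp b c) \<in> \<Lambda>"
  have L: "inL M a" "inL M b" using thmL2[OF h] by auto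
  show ?thesis by (rule hmp[OF andE2[OF L] tr[OF andE1[OF L] h]])
qed

lemma comm: "inL M a \<Longrightarrow> inL M b \<Longrightarrow> Imp (And a b) (And b a) \<in> \<Lambda>"
  by (rule cI[OF andE2 andE1])

lemma dist: "Imp (And a b) x \<in> \<Lambda> \<Longrightarrow> Imp (And a c) x \<in> \<Lambda> \<Longrightarrow> Imp (And a (Or b c)) x \<in> \<Lambda>"
proof -
  assume h1: "Imp (And a b) x \<in> \<Lambda>" and h2: "Imp (And a c) x \<in> \<Lambda>"
  have L: "inL M a" "inL M b" "inL M c" using thmL2[OF h1] thmL2[OF h2] by auto
  have 1: "Imp b (Imp a x) \<in> \<Lambda>" by (rule curry[OF tr[OF comm[OF L(2) L(1)] h1]])
  have 2: "Imp c (Imp a x) \<in> \<Lambda>" by (rule curry[OF tr[OF comm[OF L(3) L(1)] h2]])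
  have "Imp (And (Or b c) a) x \<in> \<Lambda>" by (rule uncurry[OF dE[OF 1 2]])
  moreover have o: "inL M (Or b c)" using L by simp
  ultimately show ?thesis using tr[OF comm[OF L(1) o]] by blast
qed

lemma cutl: "Imp a (Or b c) \<in> \<Lambda> \<Longrightarrow> Imp (And a c) b \<in> \<Lambda> \<Longrightarrow> Imp a b \<in> \<Lambda>"
proof -
  assume h1: "Imp a (Or b c) \<in> \<Lambda>" and h2: "Imp (And a c) b \<in> \<Lambda>"
  have L: "inL M a" "inL M b" "inL M c" using thmL2[OF h1] thmL2[OF h2] by auto
  have "Imp a (And a (Or b c)) \<in> \<Lambda>" by (rule cI[OF I[OF L(1)] h1])
  moreover have "Imp (And a (Or b c)) b \<in> \<Lambda>" by (rule dist[OF andE2[OF L(1,2)] h2])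
  ultimately show ?thesis by (rule tr)
qed

lemma monoAnd: "Imp a a' \<in> \<Lambda> \<Longrightarrow> Imp b b' \<in> \<Lambda> \<Longrightarrow> Imp (And a b) (And a' b') \<in> \<Lambda>"
proof -
  assume h1: "Imp a a' \<in> \<Lambda>" and h2: "Imp b b' \<in> \<Lambda>"
  have L: "inL M a" "inL M b" using thmL2[OF h1] thmL2[OF h2] by auto
  show ?thesis by (rule cI[OF tr[OF andE1[OF L] h1] tr[OF andE2[OF L] h2]])
qed

lemma monoOr: "Imp a a' \<in> \<Lambda> \<Longrightarrow> Imp b b' \<in> \<Lambda> \<Longrightarrow> Imp (Or a b) (Or a' b') \<in> \<Lambda>"
proof -
  assume h1: "Imp a a' \<in> \<Lambda>" and h2: "Imp b b' \<in> \<Lambda>"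
  have L: "inL M a'" "inL M b'" using thmL2[OF h1] thmL2[OF h2] by auto
  show ?thesis by (rule dE[OF tr[OF h1 orI1[OF L]] tr[OF h2 orI2[OF L]]])
qed

lemma Top_thm: "Top \<in> \<Lambda>" unfolding Top_def by (rule I) simp

lemma inL_Top[simp]: "inL M Top" by (simp add: Top_def)


lemma inL_conjs: "\<forall>x\<in>set gs. inL M x \<Longrightarrow> inL M (conjs gs)"
  by (induction gs rule: conjs.induct) auto

lemma inL_disjs: "\<forall>x\<in>set gs. inL M x \<Longrightarrow> inL M (disjs gs)"
  by (induction gs rule: disjs.induct) auto

lemma conjs_elem: "\<forall>x\<in>set gs. inL M x \<Longrightarrow> g \<in> set gs \<Longrightarrow> Imp (conjs gs) g \<in> \<Lambda>"
proof (induction gs rule: conjs.induct)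
  case 1 then show ?case by simp
next
  case (2 x) then show ?case by (simp add: I)
next
  case (3 x y zs)
  have Lr: "inL M (conjs (y#zs))" using 3 by (intro inL_conjs) auto
  have Lx: "inL M x" using 3 by simp
  show ?case
  proof (cases "g = x")
    case True then show ?thesis using andE1[OF Lx Lr] by simp
  next
    case False
    then have "Imp (conjs (y#zs)) g \<in> \<Lambda>" using 3 by simp
    then show ?thesis using tr[OF andE2[OF Lx Lr]] by simp
  qed
qed

lemma conjs_intro: "inL M c \<Longrightarrow> \<forall>g\<in>set gs. Imp c g \<in> \<Lambda> \<Longrightarrow> Imp c (conjs gs) \<in> \<Lambda>"
proof (induction gs rule: conjs.induct)
  case 1 then show ?case using weak[OF Top_thm] by simp
next
  case (2 x) then show ?case by simp
next
  case (3 x y zs)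
  then show ?case using cI by simp
qed

lemma disjs_elem: "\<forall>x\<in>set gs. inL M x \<Longrightarrow> g \<in> set gs \<Longrightarrow> Imp g (disjs gs) \<in> \<Lambda>"
proof (induction gs rule: disjs.induct)
  case 1 then show ?case by simp
next
  case (2 x) then show ?case by (simp add: I)
next
  case (3 x y zs)
  have Lr: "inL M (disjs (y#zs))" using 3 by (intro inL_disjs) auto
  have Lx: "inL M x" using 3 by simp
  show ?case
  proof (cases "g = x")
    case True then show ?thesis using orI1[OF Lx Lr] by simp
  next
    case False
    then have "Imp g (disjs (y#zs)) \<in> \<Lambda>" using 3 by simp
    then show ?thesis using tr[OF _ orI2[OF Lx Lr]] by simp
  qed
qed

lemma disjs_intro: "inL M c \<Longrightarrow> \<forall>g\<in>set gs. Imp g c \<in> \<Lambda> \<Longrightarrow> Imp (disjs gs) c \<in> \<Lambda>"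
proof (induction gs rule: disjs.induct)
  case 1 then show ?case using botE by simp
next
  case (2 x) then show ?case by simp
next
  case (3 x y zs)
  then show ?case using dE by simp
qed

lemma nxtMono: "Imp a b \<in> \<Lambda> \<Longrightarrow> Imp (Nxt a) (Nxt b) \<in> \<Lambda>"
proof -
  assume h: "Imp a b \<in> \<Lambda>"
  have L: "inL M a" "inL M b" using thmL2[OF h] by auto
  show ?thesis by (rule MP[OF nec[OF h] N4[OF L]])
qed

lemma nxt_conjs: "\<forall>x\<in>set gs. inL M x \<Longrightarrow> Imp (conjs (map Nxt gs)) (Nxt (conjs gs)) \<in> \<Lambda>"
proof (induction gs rule: conjs.induct)
  case 1 then show ?case using weak[OF nec[OF Top_thm]] by simp
next
  case (2 x) then show ?case by (simp add: I)
next
  case (3 x y zs)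
  have Lr: "inL M (conjs (y#zs))" using 3 by (intro inL_conjs) auto
  have Lx: "inL M x" using 3 by simp
  have IH: "Imp (conjs (map Nxt (y#zs))) (Nxt (conjs (y#zs))) \<in> \<Lambda>" using 3 by simp
  have "Imp (And (Nxt x) (conjs (map Nxt (y#zs)))) (And (Nxt x) (Nxt (conjs (y#zs)))) \<in> \<Lambda>"
    by (rule monoAnd[OF I IH]) (simp add: Lx)
  then show ?case using tr[OF _ N2[OF Lx Lr]] by simp
qed

lemma nxt_disjs: "\<forall>x\<in>set gs. inL M x \<Longrightarrow> Imp (Nxt (disjs gs)) (disjs (map Nxt gs)) \<in> \<Lambda>"
proof (induction gs rule: disjs.induct)
  case 1 then show ?case using N1 by simp
next
  case (2 x) then show ?case by (simp add: I)
next
  case (3 x y zs)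
  have Lr: "inL M (disjs (y#zs))" using 3 by (intro inL_disjs) auto
  have Lx: "inL M x" using 3 by simp
  have IH: "Imp (Nxt (disjs (y#zs))) (disjs (map Nxt (y#zs))) \<in> \<Lambda>" using 3 by simp
  have "Imp (Or (Nxt x) (Nxt (disjs (y#zs)))) (Or (Nxt x) (disjs (map Nxt (y#zs)))) \<in> \<Lambda>"
    by (rule monoOr[OF I IH]) (simp add: Lx)
  then show ?case using tr[OF N3[OF Lx Lr]] by simp
qed

lemma diaUnfold: "MDia \<in> M \<Longrightarrow> inL M a \<Longrightarrow> Imp (Dia a) (Or a (Nxt (Dia a))) \<in> \<Lambda>"
proof -
  assume m: "MDia \<in> M" and a: "inL M a"
  have Ld: "inL M (Dia a)" "inL M (Nxt (Dia a))" using m a by auto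
  have h0: "Imp (Or a (Nxt (Dia a))) (Dia a) \<in> \<Lambda>" by (rule diaAx[OF m a])
  have h1: "Imp a (Dia a) \<in> \<Lambda>" by (rule tr[OF orI1[OF a Ld(2)] h0])
  have h2: "Imp (Nxt (Dia a)) (Dia a) \<in> \<Lambda>" by (rule tr[OF orI2[OF a Ld(2)] h0])
  have h3: "Imp (Nxt a) (Or a (Nxt (Dia a))) \<in> \<Lambda>" by (rule tr[OF nxtMono[OF h1] orI2[OF a Ld(2)]])
  have h4: "Imp (Nxt (Nxt (Dia a))) (Or a (Nxt (Dia a))) \<in> \<Lambda>"
    by (rule tr[OF nxtMono[OF h2] orI2[OF a Ld(2)]])
  have h5: "Imp (Nxt (Or a (Nxt (Dia a)))) (Or a (Nxt (Dia a))) \<in> \<Lambda>"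
    by (rule tr[OF N3[OF a Ld(2)] dE[OF h3 h4]])
  have h6: "Imp (Dia (Or a (Nxt (Dia a)))) (Or a (Nxt (Dia a))) \<in> \<Lambda>" by (rule diaInd[OF m h5])
  have h7: "Imp (Dia a) (Dia (Or a (Nxt (Dia a)))) \<in> \<Lambda>" by (rule diaMono[OF m orI1[OF a Ld(2)]])
  show ?thesis by (rule tr[OF h7 h6])
qed

lemma cut:
  assumes Lc: "inL M c" and G: "\<Gamma> \<subseteq> Lang M" and D: "\<Delta> \<subseteq> Lang M"
    and d1: "derives \<Lambda> (insert c \<Gamma>) \<Delta>" and d2: "derives \<Lambda> \<Gamma> (insert c \<Delta>)"
  shows "derives \<Lambda> \<Gamma> \<Delta>"
proof -
  obtain gs1 ds1 where g1: "set gs1 \<subseteq> insert c \<Gamma>" "set ds1 \<subseteq> \<Delta>" "Imp (conjs gs1) (disjs ds1) \<in> \<Lambda>"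
    using d1 unfolding derives_def by blast
  obtain gs2 ds2 where g2: "set gs2 \<subseteq> \<Gamma>" "set ds2 \<subseteq> insert c \<Delta>" "Imp (conjs gs2) (disjs ds2) \<in> \<Lambda>"
    using d2 unfolding derives_def by blast
  define GG where "GG = filter (\<lambda>x. x \<noteq> c) gs1 @ gs2"
  define DD where "DD = filter (\<lambda>x. x \<noteq> c) ds2 @ ds1"
  have sG: "set GG \<subseteq> \<Gamma>" using g1 g2 unfolding GG_def by auto
  have sD: "set DD \<subseteq> \<Delta>" using g1 g2 unfolding DD_def by auto
  have LG: "\<forall>x\<in>set GG. inL M x" using sG G by auto
  have LD: "\<forall>x\<in>set DD. inL M x" using sD D by auto
  have L1: "\<forall>x\<in>set gs1. inL M x" using g1 G Lc by auto
  have L2: "\<forall>x\<in>set ds2. inL M x" using g2 D Lc by auto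
  have LcG: "inL M (conjs GG)" using inL_conjs[OF LG] .
  have LdD: "inL M (disjs DD)" using inL_disjs[OF LD] .
  have s2: "set gs2 \<subseteq> set GG" by (auto simp: GG_def)
  have a1: "Imp (conjs GG) (conjs gs2) \<in> \<Lambda>"
    by (rule conjs_intro[OF LcG]) (use s2 conjs_elem[OF LG] in blast)
  have a2: "Imp (disjs ds2) (Or (disjs DD) c) \<in> \<Lambda>"
  proof (rule disjs_intro)
    show "inL M (Or (disjs DD) c)" using LdD Lc by simp
    show "\<forall>g\<in>set ds2. Imp g (Or (disjs DD) c) \<in> \<Lambda>"
    proof
      fix g assume g: "g \<in> set ds2"
      show "Imp g (Or (disjs DD) c) \<in> \<Lambda>"
      proof (cases "g = c")
        case True then show ?thesis using orI2[OF LdD Lc] by simp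
      next
        case False
        then have "g \<in> set DD" using g unfolding DD_def by simp
        then show ?thesis using tr[OF disjs_elem[OF LD] orI1[OF LdD Lc]] by simp
      qed
    qed
  qed
  have a3: "Imp (conjs GG) (Or (disjs DD) c) \<in> \<Lambda>" by (rule tr[OF tr[OF a1 g2(3)] a2])
  have b1: "Imp (And (conjs GG) c) (conjs gs1) \<in> \<Lambda>"
  proof (rule conjs_intro)
    show "inL M (And (conjs GG) c)" using LcG Lc by simp
    show "\<forall>g\<in>set gs1. Imp (And (conjs GG) c) g \<in> \<Lambda>"
    proof
      fix g assume g: "g \<in> set gs1"
      show "Imp (And (conjs GG) c) g \<in> \<Lambda>"
      proof (cases "g = c")
        case True then show ?thesis using andE2[OF LcG Lc] by simp
      next
        case False
        then have "g \<in> set GG" using g unfolding GG_def by simp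
        then show ?thesis using tr[OF andE1[OF LcG Lc] conjs_elem[OF LG]] by simp
      qed
    qed
  qed
  have s1: "set ds1 \<subseteq> set DD" by (auto simp: DD_def)
  have b2: "Imp (disjs ds1) (disjs DD) \<in> \<Lambda>"
    by (rule disjs_intro[OF LdD]) (use s1 disjs_elem[OF LD] in blast)
  have b3: "Imp (And (conjs GG) c) (disjs DD) \<in> \<Lambda>" by (rule tr[OF b1 tr[OF g1(3) b2]])
  have "Imp (conjs GG) (disjs DD) \<in> \<Lambda>" by (rule cutl[OF a3 b3])
  then show ?thesis unfolding derives_def using sG sD by blast
qed

lemma lindenbaum:
  assumes G: "\<Gamma> \<subseteq> Lang M" and D: "\<Delta> \<subseteq> Lang M" and nd: "\<not> derives \<Lambda> \<Gamma> \<Delta>"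
  shows "\<exists>\<Phi>. prime_type M \<Lambda> \<Phi> \<and> \<Gamma> \<subseteq> fst \<Phi> \<and> \<Delta> \<subseteq> snd \<Phi>"
proof -
  define pos :: "(bool \<times> fml) set \<Rightarrow> fml set" where "pos X = {x. (True,x) \<in> X}" for X
  define neg :: "(bool \<times> fml) set \<Rightarrow> fml set" where "neg X = {x. (False,x) \<in> X}" for X
  define A where "A = {X. \<Gamma> \<subseteq> pos X \<and> \<Delta> \<subseteq> neg X \<and> pos X \<subseteq> Lang M \<and> neg X \<subseteq> Lang M
       \<and> \<not> derives \<Lambda> (pos X) (neg X)}"
  define X0 where "X0 = Pair True ` \<Gamma> \<union> Pair False ` \<Delta>"
  have pX0: "pos X0 = \<Gamma>" "neg X0 = \<Delta>" by (auto simp: pos_def neg_def X0_def)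
  have X0A: "X0 \<in> A" using pX0 G D nd by (simp add: A_def)
  have "\<forall>C\<in>chains A. \<exists>U\<in>A. \<forall>X\<in>C. X \<subseteq> U"
  proof
    fix C assume C: "C \<in> chains A"
    show "\<exists>U\<in>A. \<forall>X\<in>C. X \<subseteq> U"
    proof (cases "C = {}")
      case True then show ?thesis using X0A by blast
    next
      case False
      then obtain Y0 where Y0: "Y0 \<in> C" by blast
      have CA: "C \<subseteq> A" using C by (simp add: chains_def)
      have ch: "subset.chain UNIV C" using C by (simp add: chains_def chain_subset_alt_def)
      have "\<Union>C \<in> A"
        unfolding A_def
      proof (intro CollectI conjI)
        show "\<Gamma> \<subseteq> pos (\<Union>C)" using Y0 CA unfolding A_def pos_def by blast
        show "\<Delta> \<subseteq> neg (\<Union>C)" using Y0 CA unfolding A_def neg_def by blast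
        show "pos (\<Union>C) \<subseteq> Lang M" using CA unfolding A_def pos_def by blast
        show "neg (\<Union>C) \<subseteq> Lang M" using CA unfolding A_def neg_def by blast
        show "\<not> derives \<Lambda> (pos (\<Union>C)) (neg (\<Union>C))"
        proof
          assume "derives \<Lambda> (pos (\<Union>C)) (neg (\<Union>C))"
          then obtain gs ds where gd: "set gs \<subseteq> pos (\<Union>C)" "set ds \<subseteq> neg (\<Union>C)"
            "Imp (conjs gs) (disjs ds) \<in> \<Lambda>" unfolding derives_def by blast
          define F where "F = Pair True ` set gs \<union> Pair False ` set ds"
          have fF: "finite F" by (simp add: F_def)
          have FC: "F \<subseteq> \<Union>C" using gd unfolding F_def pos_def neg_def by auto
          obtain Y where Y: "Y \<in> C" "F \<subseteq> Y"
          proof (cases "F = {}")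
            case True then show ?thesis using that Y0 by blast
          next
            case False
            show ?thesis using finite_subset_Union_chain[OF fF FC \<open>C \<noteq> {}\<close> ch] that by blast
          qed
          have "set gs \<subseteq> pos Y" "set ds \<subseteq> neg Y" using Y(2) unfolding F_def pos_def neg_def by auto
          then have "derives \<Lambda> (pos Y) (neg Y)" using gd(3) unfolding derives_def by blast
          moreover have "Y \<in> A" using Y CA by blast
          ultimately show False unfolding A_def by blast
        qed
      qed
      then show ?thesis by blast
    qed
  qed
  then obtain X where XA: "X \<in> A" and mx: "\<forall>Y\<in>A. X \<subseteq> Y \<longrightarrow> Y = X"
    using Zorn_Lemma2[of A] by blast
  have XP: "\<Gamma> \<subseteq> pos X" "\<Delta> \<subseteq> neg X" "pos X \<subseteq> Lang M" "neg X \<subseteq> Lang M"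
    "\<not> derives \<Lambda> (pos X) (neg X)" using XA unfolding A_def by auto
  have U: "pos X \<union> neg X = Lang M"
  proof
    show "pos X \<union> neg X \<subseteq> Lang M" using XP by blast
    show "Lang M \<subseteq> pos X \<union> neg X"
    proof
      fix c assume c: "c \<in> Lang M"
      show "c \<in> pos X \<union> neg X"
      proof (rule ccontr)
        assume nc: "c \<notin> pos X \<union> neg X"
        have d1: "derives \<Lambda> (insert c (pos X)) (neg X)"
        proof (rule ccontr)
          assume n1: "\<not> derives \<Lambda> (insert c (pos X)) (neg X)"
          let ?Y = "insert (True, c) X"
          have "pos ?Y = insert c (pos X)" "neg ?Y = neg X" unfolding pos_def neg_def by auto
          then have "?Y \<in> A" using XP n1 c unfolding A_def by auto
          then have "?Y = X" using mx by blast
          then have "c \<in> pos X" unfolding pos_def by blast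
          then show False using nc by blast
        qed
        have d2: "derives \<Lambda> (pos X) (insert c (neg X))"
        proof (rule ccontr)
          assume n1: "\<not> derives \<Lambda> (pos X) (insert c (neg X))"
          let ?Y = "insert (False, c) X"
          have "pos ?Y = pos X" "neg ?Y = insert c (neg X)" unfolding pos_def neg_def by auto
          then have "?Y \<in> A" using XP n1 c unfolding A_def by auto
          then have "?Y = X" using mx by blast
          then have "c \<in> neg X" unfolding neg_def by blast
          then show False using nc by blast
        qed
        have "derives \<Lambda> (pos X) (neg X)" using cut[OF _ XP(3) XP(4) d1 d2] c by simp
        then show False using XP(5) by blast
      qed
    qed
  qed
  have "prime_type M \<Lambda> (pos X, neg X)" unfolding prime_type_def using XP U by simp
  then show ?thesis using XP by (intro exI[of _ "(pos X, neg X)"]) simp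
qed

lemma prime_no: "prime_type M \<Lambda> \<Phi> \<Longrightarrow> set gs \<subseteq> fst \<Phi> \<Longrightarrow> set ds \<subseteq> snd \<Phi> \<Longrightarrow>
   Imp (conjs gs) (disjs ds) \<in> \<Lambda> \<Longrightarrow> False"
  unfolding prime_type_def derives_def by blast

lemma prime_L1: "prime_type M \<Lambda> \<Phi> \<Longrightarrow> x \<in> fst \<Phi> \<Longrightarrow> inL M x"
  unfolding prime_type_def by auto
lemma prime_L2: "prime_type M \<Lambda> \<Phi> \<Longrightarrow> x \<in> snd \<Phi> \<Longrightarrow> inL M x"
  unfolding prime_type_def by auto
lemma prime_cases: "prime_type M \<Lambda> \<Phi> \<Longrightarrow> inL M x \<Longrightarrow> x \<notin> fst \<Phi> \<Longrightarrow> x \<in> snd \<Phi>"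
  unfolding prime_type_def by auto

lemma prime_disj: "prime_type M \<Lambda> \<Phi> \<Longrightarrow> x \<in> fst \<Phi> \<Longrightarrow> x \<in> snd \<Phi> \<Longrightarrow> False"
  using prime_no[of \<Phi> "[x]" "[x]"] I prime_L1 by auto

lemma prime_closed: "prime_type M \<Lambda> \<Phi> \<Longrightarrow> set gs \<subseteq> fst \<Phi> \<Longrightarrow> Imp (conjs gs) x \<in> \<Lambda> \<Longrightarrow> x \<in> fst \<Phi>"
proof (rule ccontr)
  assume p: "prime_type M \<Lambda> \<Phi>" and g: "set gs \<subseteq> fst \<Phi>" and h: "Imp (conjs gs) x \<in> \<Lambda>"
    and n: "x \<notin> fst \<Phi>"
  have "x \<in> snd \<Phi>" using prime_cases[OF p _ n] thmL2[OF h] by auto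
  then show False using prime_no[OF p g, of "[x]"] h by simp
qed

lemma prime_closed_neg: "prime_type M \<Lambda> \<Phi> \<Longrightarrow> set ds \<subseteq> snd \<Phi> \<Longrightarrow> Imp x (disjs ds) \<in> \<Lambda> \<Longrightarrow> x \<in> snd \<Phi>"
proof (rule ccontr)
  assume p: "prime_type M \<Lambda> \<Phi>" and g: "set ds \<subseteq> snd \<Phi>" and h: "Imp x (disjs ds) \<in> \<Lambda>"
    and n: "x \<notin> snd \<Phi>"
  have "x \<in> fst \<Phi>" using p thmL2[OF h] n unfolding prime_type_def by auto
  then show False using prime_no[OF p _ g, of "[x]"] h by simp
qed

lemma prime_type_conds: "prime_type M \<Lambda> \<Phi> \<Longrightarrow> type_conds \<Phi>"
proof -
  assume p: "prime_type M \<Lambda> \<Phi>"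
  note L1 = prime_L1[OF p] and L2 = prime_L2[OF p]
  show ?thesis unfolding type_conds_def Let_def
  proof (intro conjI allI impI)
    show "fst \<Phi> \<inter> snd \<Phi> = {}" using prime_disj[OF p] by blast
    show "Bot \<notin> fst \<Phi>" using prime_no[OF p, of "[Bot]" "[]"] I[of Bot] by auto
  next
    fix a b assume h: "And a b \<in> fst \<Phi>"
    have L: "inL M a" "inL M b" using L1[OF h] by auto
    show "a \<in> fst \<Phi>" using prime_closed[OF p, of "[And a b]"] h andE1[OF L] by simp
    show "b \<in> fst \<Phi>" using prime_closed[OF p, of "[And a b]"] h andE2[OF L] by simp
  next
    fix a b assume h: "And a b \<in> snd \<Phi>"
    have L: "inL M a" "inL M b" using L2[OF h] by auto
    show "a \<in> snd \<Phi> \<or> b \<in> snd \<Phi>"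
      using prime_no[OF p, of "[a,b]" "[And a b]"] h I[of "And a b"] L prime_cases[OF p] by force
  next
    fix a b assume h: "Or a b \<in> fst \<Phi>"
    have L: "inL M a" "inL M b" using L1[OF h] by auto
    show "a \<in> fst \<Phi> \<or> b \<in> fst \<Phi>"
      using prime_no[OF p, of "[Or a b]" "[a,b]"] h I[of "Or a b"] L prime_cases[OF p] by force
  next
    fix a b assume h: "Or a b \<in> snd \<Phi>"
    have L: "inL M a" "inL M b" using L2[OF h] by auto
    show "a \<in> snd \<Phi>" using prime_closed_neg[OF p, of "[Or a b]"] h orI1[OF L] by simp
    show "b \<in> snd \<Phi>" using prime_closed_neg[OF p, of "[Or a b]"] h orI2[OF L] by simp
  next
    fix a b assume h: "Imp a b \<in> fst \<Phi>"
    have L: "inL M a" "inL M b" using L1[OF h] by auto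
    have mp: "Imp (And (Imp a b) a) b \<in> \<Lambda>" by (rule uncurry[OF I]) (simp add: L)
    show "a \<in> snd \<Phi> \<or> b \<in> fst \<Phi>"
      using prime_closed[OF p, of "[Imp a b, a]"] h mp L prime_cases[OF p] by force
  next
    fix a b assume h: "Imp a b \<in> snd \<Phi>"
    have L: "inL M a" "inL M b" using L2[OF h] by auto
    show "b \<in> snd \<Phi>" using prime_closed_neg[OF p, of "[Imp a b]"] h K[OF L(2) L(1)] by simp
  next
    fix a assume h: "Dia a \<in> snd \<Phi>"
    have L: "inL M a" "MDia \<in> M" using L2[OF h] by auto
    have "Imp a (Dia a) \<in> \<Lambda>" by (rule tr[OF orI1 diaAx[OF L(2,1)]]) (simp_all add: L)
    then show "a \<in> snd \<Phi>" using prime_closed_neg[OF p, of "[Dia a]"] h by simp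
  qed
qed

definition nextT :: "ftype \<Rightarrow> ftype" where
  "nextT \<Phi> = ({x. Nxt x \<in> fst \<Phi>}, {x. Nxt x \<in> snd \<Phi>})"

lemma next_prime: "prime_type M \<Lambda> \<Phi> \<Longrightarrow> prime_type M \<Lambda> (nextT \<Phi>)"
proof -
  assume p: "prime_type M \<Lambda> \<Phi>"
  note L1 = prime_L1[OF p] and L2 = prime_L2[OF p]
  have s1: "fst (nextT \<Phi>) \<subseteq> Lang M" using L1[of "Nxt _"] by (auto simp: nextT_def)
  have s2: "snd (nextT \<Phi>) \<subseteq> Lang M" using L2[of "Nxt _"] by (auto simp: nextT_def)
  have u: "fst (nextT \<Phi>) \<union> snd (nextT \<Phi>) = Lang M"
  proof -
    have "\<forall>x. inL M x \<longrightarrow> Nxt x \<in> fst \<Phi> \<or> Nxt x \<in> snd \<Phi>"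
      using prime_cases[OF p] by (metis inL.simps(6))
    then show ?thesis using s1 s2 by (auto simp: nextT_def)
  qed
  have nd: "\<not> derives \<Lambda> (fst (nextT \<Phi>)) (snd (nextT \<Phi>))"
  proof
    assume "derives \<Lambda> (fst (nextT \<Phi>)) (snd (nextT \<Phi>))"
    then obtain gs ds where gd: "set gs \<subseteq> fst (nextT \<Phi>)" "set ds \<subseteq> snd (nextT \<Phi>)"
      "Imp (conjs gs) (disjs ds) \<in> \<Lambda>" unfolding derives_def by blast
    have Lg: "\<forall>x\<in>set gs. inL M x" using gd(1) s1 by auto
    have Ld: "\<forall>x\<in>set ds. inL M x" using gd(2) s2 by auto
    have "Imp (conjs (map Nxt gs)) (disjs (map Nxt ds)) \<in> \<Lambda>"
      by (rule tr[OF nxt_conjs[OF Lg] tr[OF nxtMono[OF gd(3)] nxt_disjs[OF Ld]]])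
    moreover have "set (map Nxt gs) \<subseteq> fst \<Phi>" "set (map Nxt ds) \<subseteq> snd \<Phi>"
      using gd(1,2) by (auto simp: nextT_def)
    ultimately show False using prime_no[OF p] by blast
  qed
  show ?thesis unfolding prime_type_def using s1 s2 u nd by blast
qed

lemma Iff_parts: "Iff a b \<in> \<Lambda> \<Longrightarrow> Imp a b \<in> \<Lambda> \<and> Imp b a \<in> \<Lambda>"
proof -
  assume h: "Iff a b \<in> \<Lambda>"
  have L: "inL M (Imp a b)" "inL M (Imp b a)" using thmL[OF h] by (auto simp: Iff_def)
  show ?thesis using MP[OF h[unfolded Iff_def] andE1[OF L]] MP[OF h[unfolded Iff_def] andE2[OF L]]
    by blast
qed

lemma next_sensible: "prime_type M \<Lambda> \<Phi> \<Longrightarrow> sensible \<Phi> (nextT \<Phi>)"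
proof -
  assume p: "prime_type M \<Lambda> \<Phi>"
  note L1 = prime_L1[OF p] and L2 = prime_L2[OF p]
  have allP: "Imp (All a) (Nxt (All a)) \<in> \<Lambda> \<and> Imp (Nxt (All a)) (All a) \<in> \<Lambda>"
    if "inL M (All a)" for a
    using Iff_parts[OF allIff] that by simp
  show ?thesis unfolding sensible_def
  proof (intro conjI allI impI iffI)
    fix a show "Nxt a \<in> fst \<Phi> \<Longrightarrow> a \<in> fst (nextT \<Phi>)" by (simp add: nextT_def)
  next
    fix a show "Nxt a \<in> snd \<Phi> \<Longrightarrow> a \<in> snd (nextT \<Phi>)" by (simp add: nextT_def)
  next
    fix a assume h: "Dia a \<in> fst \<Phi>"
    have L: "inL M a" "MDia \<in> M" using L1[OF h] by auto
    have "a \<in> fst \<Phi> \<or> Nxt (Dia a) \<in> fst \<Phi>"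
      using prime_no[OF p, of "[Dia a]" "[a, Nxt (Dia a)]"] h diaUnfold[OF L(2,1)] L
        prime_cases[OF p, of a] prime_cases[OF p, of "Nxt (Dia a)"] by force
    then show "a \<in> fst \<Phi> \<or> Dia a \<in> fst (nextT \<Phi>)" by (simp add: nextT_def)
  next
    fix a assume h: "Dia a \<in> snd \<Phi>"
    have L: "inL M a" "MDia \<in> M" using L2[OF h] by auto
    have "Imp (Nxt (Dia a)) (Dia a) \<in> \<Lambda>" by (rule tr[OF orI2 diaAx[OF L(2,1)]]) (simp_all add: L)
    then show "Dia a \<in> snd (nextT \<Phi>)"
      using prime_closed_neg[OF p, of "[Dia a]"] h by (simp add: nextT_def)
  next
    fix a assume h: "All a \<in> fst \<Phi>"
    show "All a \<in> fst (nextT \<Phi>)"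
      using prime_closed[OF p, of "[All a]"] h allP[OF L1[OF h]] by (simp add: nextT_def)
  next
    fix a assume h: "All a \<in> fst (nextT \<Phi>)"
    then have h': "Nxt (All a) \<in> fst \<Phi>" by (simp add: nextT_def)
    have "inL M (All a)" using L1[OF h'] by simp
    then show "All a \<in> fst \<Phi>" using prime_closed[OF p, of "[Nxt (All a)]"] h' allP by simp
  next
    fix a assume h: "All a \<in> snd \<Phi>"
    show "All a \<in> snd (nextT \<Phi>)"
      using prime_closed_neg[OF p, of "[All a]"] h allP[OF L2[OF h]] by (simp add: nextT_def)
  next
    fix a assume h: "All a \<in> snd (nextT \<Phi>)"
    then have h': "Nxt (All a) \<in> snd \<Phi>" by (simp add: nextT_def)
    have "inL M (All a)" using L2[OF h'] by simp
    then show "All a \<in> snd \<Phi>" using prime_closed_neg[OF p, of "[Nxt (All a)]"] h' allP by simp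
  qed
qed

lemma sensible_is_next: "prime_type M \<Lambda> \<Phi> \<Longrightarrow> prime_type M \<Lambda> \<Psi> \<Longrightarrow> sensible \<Phi> \<Psi> \<Longrightarrow> \<Psi> = nextT \<Phi>"
proof -
  assume p: "prime_type M \<Lambda> \<Phi>" and q: "prime_type M \<Lambda> \<Psi>" and s: "sensible \<Phi> \<Psi>"
  have "fst \<Psi> = {x. Nxt x \<in> fst \<Phi>}"
  proof
    show "{x. Nxt x \<in> fst \<Phi>} \<subseteq> fst \<Psi>" using s unfolding sensible_def by blast
    show "fst \<Psi> \<subseteq> {x. Nxt x \<in> fst \<Phi>}"
    proof
      fix x assume x: "x \<in> fst \<Psi>"
      have "inL M (Nxt x)" using prime_L1[OF q x] by simp
      moreover have "Nxt x \<notin> snd \<Phi>" using s x prime_disj[OF q x] unfolding sensible_def by blast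
      ultimately show "x \<in> {x. Nxt x \<in> fst \<Phi>}" using prime_cases[OF p] by blast
    qed
  qed
  moreover have "snd \<Psi> = {x. Nxt x \<in> snd \<Phi>}"
  proof
    show "{x. Nxt x \<in> snd \<Phi>} \<subseteq> snd \<Psi>" using s unfolding sensible_def by blast
    show "snd \<Psi> \<subseteq> {x. Nxt x \<in> snd \<Phi>}"
    proof
      fix x assume x: "x \<in> snd \<Psi>"
      have "inL M (Nxt x)" using prime_L2[OF q x] by simp
      moreover have "Nxt x \<notin> fst \<Phi>" using s x prime_disj[OF q _ x] unfolding sensible_def by blast
      ultimately show "x \<in> {x. Nxt x \<in> snd \<Phi>}" using p unfolding prime_type_def by auto
    qed
  qed
  ultimately show ?thesis unfolding nextT_def by (simp add: prod_eq_iff)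
qed

lemma impWit:
  assumes p: "prime_type M \<Lambda> \<Phi>" and h: "Imp a b \<in> snd \<Phi>"
  shows "\<exists>\<Psi>. prime_type M \<Lambda> \<Psi> \<and> leT \<Phi> \<Psi> \<and> a \<in> fst \<Psi> \<and> b \<in> snd \<Psi>"
proof -
  have L: "inL M a" "inL M b" using prime_L2[OF p h] by auto
  have nd: "\<not> derives \<Lambda> (insert a (fst \<Phi>)) {b}"
  proof
    assume "derives \<Lambda> (insert a (fst \<Phi>)) {b}"
    then obtain gs ds where gd: "set gs \<subseteq> insert a (fst \<Phi>)" "set ds \<subseteq> {b}"
      "Imp (conjs gs) (disjs ds) \<in> \<Lambda>" unfolding derives_def by blast
    define GG where "GG = filter (\<lambda>x. x \<noteq> a) gs"
    have sG: "set GG \<subseteq> fst \<Phi>" using gd(1) unfolding GG_def by auto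
    have LG: "\<forall>x\<in>set GG. inL M x" using sG prime_L1[OF p] by auto
    have LcG: "inL M (conjs GG)" by (rule inL_conjs[OF LG])
    have d1: "Imp (disjs ds) b \<in> \<Lambda>" by (rule disjs_intro[OF L(2)]) (use gd(2) I[OF L(2)] in auto)
    have c1: "Imp (And (conjs GG) a) (conjs gs) \<in> \<Lambda>"
    proof (rule conjs_intro)
      show "inL M (And (conjs GG) a)" using LcG L by simp
      show "\<forall>g\<in>set gs. Imp (And (conjs GG) a) g \<in> \<Lambda>"
      proof
        fix g assume g: "g \<in> set gs"
        show "Imp (And (conjs GG) a) g \<in> \<Lambda>"
        proof (cases "g = a")
          case True then show ?thesis using andE2[OF LcG L(1)] by simp
        next
          case False
          then have "g \<in> set GG" using g unfolding GG_def by simp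
          then show ?thesis using tr[OF andE1[OF LcG L(1)] conjs_elem[OF LG]] by simp
        qed
      qed
    qed
    have "Imp (conjs GG) (Imp a b) \<in> \<Lambda>" by (rule curry[OF tr[OF c1 tr[OF gd(3) d1]]])
    then show False using prime_no[OF p sG, of "[Imp a b]"] h by simp
  qed
  have s: "insert a (fst \<Phi>) \<subseteq> Lang M" "{b} \<subseteq> Lang M" using L p unfolding prime_type_def by auto
  obtain \<Psi> where \<Psi>: "prime_type M \<Lambda> \<Psi>" "insert a (fst \<Phi>) \<subseteq> fst \<Psi>" "{b} \<subseteq> snd \<Psi>"
    using lindenbaum[OF s nd] by blast
  have "snd \<Psi> \<subseteq> snd \<Phi>"
  proof
    fix x assume x: "x \<in> snd \<Psi>"
    have "x \<notin> fst \<Phi>" using prime_disj[OF \<Psi>(1) _ x] \<Psi>(2) by blast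
    then show "x \<in> snd \<Phi>" using prime_cases[OF p prime_L2[OF \<Psi>(1) x]] by blast
  qed
  then show ?thesis using \<Psi> unfolding leT_def by blast
qed

end

theorem proposition5p6:
  fixes M :: "modality set" and \<Lambda> :: "fml set"
  assumes "admissible M \<Lambda>"
  shows "det_weak_quasimodel (Wc M \<Lambda>) leT Sc id"
proof -
  interpret adm M \<Lambda> using assms by (unfold_locales)
  show ?thesis unfolding det_weak_quasimodel_def Wc_def Sc_def
  proof (intro conjI ballI allI impI)
    fix w show "leT w w" by (simp add: leT_def)
  next
    fix u v w assume "leT u v" "leT v w" then show "leT u w" unfolding leT_def by blast
  next
    fix u v assume "leT u v" "leT v u" then show "u = v" unfolding leT_def prod_eq_iff by blast
  next
    fix w assume "w \<in> {\<Phi>. prime_type M \<Lambda> \<Phi>}"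
    then show "type_conds (id w)" using prime_type_conds by simp
  next
    fix u v assume "leT u v" then show "leT (id u) (id v)" by simp
  next
    fix w a b assume w: "w \<in> {\<Phi>. prime_type M \<Lambda> \<Phi>}" and h: "Imp a b \<in> snd (id w)"
    then show "\<exists>v\<in>{\<Phi>. prime_type M \<Lambda> \<Phi>}. leT w v \<and> a \<in> fst (id v) \<and> b \<in> snd (id v)"
      using impWit by simp
  next
    fix w assume w: "w \<in> {\<Phi>. prime_type M \<Lambda> \<Phi>}"
    then have p: "prime_type M \<Lambda> w" by simp
    show "\<exists>!v. v \<in> {\<Phi>. prime_type M \<Lambda> \<Phi>} \<and> sensible w v"
    proof (rule ex1I[of _ "nextT w"])
      show "nextT w \<in> {\<Phi>. prime_type M \<Lambda> \<Phi>} \<and> sensible w (nextT w)"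
        using next_prime[OF p] next_sensible[OF p] by simp
      fix v assume "v \<in> {\<Phi>. prime_type M \<Lambda> \<Phi>} \<and> sensible w v"
      then show "v = nextT w" using sensible_is_next[OF p] by simp
    qed
  next
    fix u v u' v'
    assume u: "u \<in> {\<Phi>. prime_type M \<Lambda> \<Phi>}" and v: "v \<in> {\<Phi>. prime_type M \<Lambda> \<Phi>}"
      and u': "u' \<in> {\<Phi>. prime_type M \<Lambda> \<Phi>}" and v': "v' \<in> {\<Phi>. prime_type M \<Lambda> \<Phi>}"
      and le: "leT u v" and su: "sensible u u'" and sv: "sensible v v'"
    have pu: "prime_type M \<Lambda> u" and pv: "prime_type M \<Lambda> v" and pu': "prime_type M \<Lambda> u'"
      and pv': "prime_type M \<Lambda> v'" using u v u' v' by auto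
    have eu: "u' = nextT u" by (rule sensible_is_next[OF pu pu' su])
    have ev: "v' = nextT v" by (rule sensible_is_next[OF pv pv' sv])
    show "leT u' v'" using le unfolding eu ev leT_def nextT_def by auto
  next
    fix w v assume "w \<in> {\<Phi>. prime_type M \<Lambda> \<Phi>}" "v \<in> {\<Phi>. prime_type M \<Lambda> \<Phi>}" "sensible w v"
    then show "sensible (id w) (id v)" by simp
  qed
qed

end
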